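(* (i) There is a constant $C$, independent of $N_1$ and $f$, such that for every $f\in H^1(\mathscr I_p)$, $$\Big(\sum_{k=3}^{N_1-1}\Big|\int_{\mathscr I_p}f\,\beta_k\tilde\Theta_k\,d\tilde s\Big|^2\Big)^{1/2}\le C\|\partial_{\tilde s}f\|_{L^2(\mathscr I_p)}.$$ (ii) There is a constant $C$, independent of $N_1$ and $f$, such that for every $f\in W^{1,\infty}(\mathscr I_p)$ one can write, for $3\le k\le N_1-1$ and $0\le j\le N_1-1$, $$\int_{\mathscr I_p}f\,\tilde\Theta_j\,\beta_k\tilde\Theta_k\,d\tilde s=a_1\mathbb E^{(1)}_{kj}+a_2\,\beta_j\,\mathbb E^{(2)}_{kj},$$ where $\mathbb E^{(1)},\mathbb E^{(2)}$ are matrices of $\ell^2$ operator norm at most one and $|a_1|\le C\|\partial_{\tilde s}f\|_{L^\infty}$, $|a_2|\le C\|f\|_{L^\infty}$.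
   Context: Fix $R_0>0$, an integer $N_1\ge4$ and $p_0>-1/2$; let $\mathscr I_p=\mathbb R/(2\pi R_0(1+p_0)\mathbb Z)$ with coordinate $\tilde s$. Let $\Theta_0=(2\pi R_0)^{-1/2}$ and, for $k\ge1$, $\Theta_{2k-1}(s)=(2\pi R_0)^{-1/2}\cos(ks/R_0)$, $\Theta_{2k}(s)=(2\pi R_0)^{-1/2}\sin(ks/R_0)$, with $\beta_0=0$, $\beta_{2k-1}=\beta_{2k}=k$. Set $\tilde\Theta_k(\tilde s)=\Theta_k(\tilde s/(1+p_0))$ on $\mathscr I_p$. Norms on $\mathscr I_p$ are with respect to $d\tilde s$. *)

theory Defs
  imports "HOL-Analysis.Analysis"
begin

definition beta :: "nat \<Rightarrow> real" where
  "beta n = real ((n + 1) div 2)"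

definition Theta :: "real \<Rightarrow> nat \<Rightarrow> real \<Rightarrow> real" where
  "Theta R0 n s =
     (if n = 0 then 1 / sqrt (2 * pi * R0)
      else if odd n then cos (beta n * s / R0) / sqrt (2 * pi * R0)
      else sin (beta n * s / R0) / sqrt (2 * pi * R0))"

definition Lp :: "real \<Rightarrow> real \<Rightarrow> real" where
  "Lp R0 p0 = 2 * pi * R0 * (1 + p0)"

definition Theta_t :: "real \<Rightarrow> real \<Rightarrow> nat \<Rightarrow> real \<Rightarrow> real" where
  "Theta_t R0 p0 n st = Theta R0 n (st / (1 + p0))"

text \<open>f is an L-periodic function with a derivative g in the sense that
  f b - f a = integral of g over [a,b] (absolute continuity / weak derivative).\<close>
definition periodic_with_deriv :: "real \<Rightarrow> (real \<Rightarrow> real) \<Rightarrow> (real \<Rightarrow> real) \<Rightarrow> bool" where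
  "periodic_with_deriv L f g \<longleftrightarrow>
     (\<forall>x. f (x + L) = f x) \<and> (\<forall>a b. a \<le> b \<longrightarrow> (g has_integral (f b - f a)) {a..b})"

definition H1_circle :: "real \<Rightarrow> (real \<Rightarrow> real) \<Rightarrow> (real \<Rightarrow> real) \<Rightarrow> bool" where
  "H1_circle L f g \<longleftrightarrow> periodic_with_deriv L f g \<and> (\<lambda>x. (g x)\<^sup>2) integrable_on {0..L}"

definition L2norm_circle :: "real \<Rightarrow> (real \<Rightarrow> real) \<Rightarrow> real" where
  "L2norm_circle L g = sqrt (integral {0..L} (\<lambda>x. (g x)\<^sup>2))"

definition opnorm_le1 :: "nat set \<Rightarrow> nat set \<Rightarrow> (nat \<Rightarrow> nat \<Rightarrow> real) \<Rightarrow> bool" where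
  "opnorm_le1 K J E \<longleftrightarrow>
     (\<forall>x :: nat \<Rightarrow> real. (\<Sum>k\<in>K. (\<Sum>j\<in>J. E k j * x j)\<^sup>2) \<le> (\<Sum>j\<in>J. (x j)\<^sup>2))"

end

theory Submission
  imports Defs "HOL-Analysis.Analysis"
begin

lemma meas_cont: "continuous_on UNIV (p::real\<Rightarrow>real) \<Longrightarrow> p \<in> borel_measurable lebesgue"
  using continuous_imp_measurable_on_sets_lebesgue[of UNIV p] by simp
lemma mf: "fst \<in> borel_measurable ((lebesgue::real measure) \<Otimes>\<^sub>M (lebesgue::real measure))"
  using measurable_comp[OF measurable_fst id_borel_measurable_lebesgue] by simp
lemma ms: "snd \<in> borel_measurable ((lebesgue::real measure) \<Otimes>\<^sub>M (lebesgue::real measure))"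
  using measurable_comp[OF measurable_snd id_borel_measurable_lebesgue] by simp

lemma mtri:
  fixes G p :: "real \<Rightarrow> real"
  assumes G: "G \<in> borel_measurable lebesgue" and "continuous_on UNIV p"
  shows "(\<lambda>(t,s). G t * (indicator {t..L} s * p s)) \<in> borel_measurable (lebesgue \<Otimes>\<^sub>M lebesgue)"
proof -
  define S where "S = {x \<in> space (lebesgue \<Otimes>\<^sub>M (lebesgue::real measure)). fst x \<le> snd x \<and> snd x \<le> L}"
  have p: "p \<in> borel_measurable lebesgue" using meas_cont assms(2) by blast
  have e: "(\<lambda>(t,s). G t * (indicator {t..L} s * p s)) = (\<lambda>x. G (fst x) * (indicator S x * p (snd x)))"
      by (auto simp: indicator_def fun_eq_iff S_def space_pair_measure)
  have 1: "(\<lambda>x. G (fst x)) \<in> borel_measurable (lebesgue \<Otimes>\<^sub>M (lebesgue::real measure))"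
    by (rule measurable_compose[OF measurable_fst G])
  have 2: "(\<lambda>x. p (snd x)) \<in> borel_measurable (lebesgue \<Otimes>\<^sub>M (lebesgue::real measure))"
    by (rule measurable_compose[OF measurable_snd p])
  have 3: "(indicator S :: real \<times> real \<Rightarrow> real) \<in> borel_measurable (lebesgue \<Otimes>\<^sub>M (lebesgue::real measure))"
  proof (rule borel_measurable_indicator)
    have a: "{x \<in> space (lebesgue \<Otimes>\<^sub>M (lebesgue::real measure)). fst x \<le> snd x} \<in> sets (lebesgue \<Otimes>\<^sub>M (lebesgue::real measure))"
      by (rule borel_measurable_le[OF mf ms])
    have b: "UNIV \<times> {..L} \<in> sets (lebesgue \<Otimes>\<^sub>M (lebesgue::real measure))"
      by (rule pair_measureI) auto
    have "S = 
      {x \<in> space (lebesgue \<Otimes>\<^sub>M (lebesgue::real measure)). fst x \<le> snd x} \<inter> (UNIV \<times> {..L})" by (auto simp: S_def)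
    then show "S \<in> sets (lebesgue \<Otimes>\<^sub>M (lebesgue::real measure))"
      using a b by auto
  qed
  show ?thesis unfolding e using 1 2 3 by (intro borel_measurable_times) auto
qed

lemma sf_leb: "sigma_finite_measure (lebesgue :: real measure)"
  unfolding sigma_finite_measure_def
proof (rule exI[where x="range (\<lambda>n::nat. {-real n..real n})"], intro conjI)
  show "countable (range (\<lambda>n::nat. {-real n..real n}))" by simp
  show "range (\<lambda>n::nat. {-real n..real n}) \<subseteq> sets lebesgue" by auto
  show "\<Union> (range (\<lambda>n::nat. {-real n..real n})) = space lebesgue"
  proof -
    have "x \<in> \<Union> (range (\<lambda>n::nat. {-real n..real n}))" for x :: real
    proof -
      obtain n::nat where "\<bar>x\<bar> \<le> real n" using real_arch_simple by blast
      then show ?thesis by (auto intro!: exI[of _ n])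
    qed
    then show ?thesis by auto
  qed
  show "\<forall>a\<in>range (\<lambda>n::nat. {-real n..real n}). emeasure lebesgue a \<noteq> \<infinity>"
    by auto
qed

interpretation leb: sigma_finite_measure "lebesgue :: real measure" by (rule sf_leb)
interpretation lebp: pair_sigma_finite "lebesgue :: real measure" "lebesgue :: real measure" ..

lemma Icc_fin: "emeasure lebesgue {a..b::real} < \<infinity>"
  using fmeasurableD2[OF lmeasurable_cbox[of a b]] by (simp add: top.not_eq_extremum)

lemma LI: "set_integrable lebesgue S f \<Longrightarrow> (\<integral>x. indicator S x * f x \<partial>lebesgue) = integral S (f::real\<Rightarrow>real)"
  using set_lebesgue_integral_eq_integral(2)[of S f] by (simp add: set_lebesgue_integral_def)

lemma ibp:
  fixes f g p p' :: "real \<Rightarrow> real"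
  assumes L: "0 \<le> L"
  and fg: "\<And>a b. a \<le> b \<Longrightarrow> (g has_integral (f b - f a)) {a..b}"
  and gabs: "g absolutely_integrable_on {0..L}"
  and dp: "\<And>x. (p has_real_derivative p' x) (at x)"
  and cp': "continuous_on UNIV p'"
  shows "integral {0..L} (\<lambda>s. p' s * f s) = f L * p L - f 0 * p 0 - integral {0..L} (\<lambda>t. g t * p t)"
proof -
  define G where "G t = indicator {0..L} t * g t" for t
  have Gi: "integrable lebesgue G"
    using gabs unfolding set_integrable_def G_def by simp
  then have Gm: "G \<in> borel_measurable lebesgue" by (rule borel_measurable_integrable)
  obtain B where B: "\<And>x. x \<in> {0..L} \<Longrightarrow> \<bar>p' x\<bar> \<le> B"
  proof -
    have "compact (p' ` {0..L})"
      by (rule compact_continuous_image[OF continuous_on_subset[OF cp']]) auto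
    then obtain B where "\<forall>y\<in>p' ` {0..L}. norm y \<le> B" using compact_imp_bounded bounded_iff by metis
    then show ?thesis by (intro that[of B]) auto
  qed
  define F where "F t s = G t * (indicator {t..L} s * p' s)" for t s
  define P where "P t s = \<bar>G t\<bar> * (B * indicator {0..L} s)" for t s
  have Pm: "(\<lambda>(t,s). P t s) \<in> borel_measurable (lebesgue \<Otimes>\<^sub>M (lebesgue::real measure))"
  proof -
    have 1: "(\<lambda>x. \<bar>G (fst x)\<bar>) \<in> borel_measurable (lebesgue \<Otimes>\<^sub>M (lebesgue::real measure))"
      using measurable_compose[OF measurable_fst Gm] by (intro borel_measurable_abs) 
    have 2: "(\<lambda>x. B * indicator {0..L} (snd x)) \<in> borel_measurable (lebesgue \<Otimes>\<^sub>M (lebesgue::real measure))"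
      by (intro borel_measurable_times borel_measurable_const measurable_compose[OF measurable_snd] borel_measurable_indicator) auto
    have e: "(\<lambda>(t,s). P t s) = (\<lambda>x. \<bar>G (fst x)\<bar> * (B * indicator {0..L} (snd x)))"
      by (auto simp: P_def fun_eq_iff)
    show ?thesis unfolding e by (rule borel_measurable_times[OF 1 2])
  qed
  have Pi: "integrable (lebesgue \<Otimes>\<^sub>M (lebesgue::real measure)) (\<lambda>(t,s). P t s)"
  proof (rule lebp.Fubini_integrable)
    show "(\<lambda>(t,s). P t s) \<in> borel_measurable (lebesgue \<Otimes>\<^sub>M (lebesgue::real measure))" by (rule Pm)
    have "(\<lambda>t. \<integral>s. norm ((\<lambda>(t,s). P t s) (t, s)) \<partial>lebesgue) = (\<lambda>t. \<bar>G t\<bar> * (\<bar>B\<bar> * measure lebesgue {0..L}))"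
      by (auto simp: P_def fun_eq_iff abs_mult)
    then show "integrable lebesgue (\<lambda>t. \<integral>s. norm ((\<lambda>(t,s). P t s) (t, s)) \<partial>lebesgue)"
      using Gi by simp
    show "AE t in lebesgue. integrable lebesgue (\<lambda>s. (\<lambda>(t,s). P t s) (t, s))"
      using Icc_fin by (auto simp: P_def)
  qed
  have Fm: "(\<lambda>(t,s). F t s) \<in> borel_measurable (lebesgue \<Otimes>\<^sub>M (lebesgue::real measure))"
    unfolding F_def by (rule mtri[OF Gm cp'])
  have Fi: "integrable (lebesgue \<Otimes>\<^sub>M (lebesgue::real measure)) (\<lambda>(t,s). F t s)"
  proof (rule Bochner_Integration.integrable_bound[OF Pi Fm], rule AE_I2, clarify)
    fix t s :: real
    show "norm (F t s) \<le> norm (P t s)"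
    proof (cases "G t = 0 \<or> s \<notin> {t..L}")
      case True then show ?thesis by (auto simp: F_def P_def)
    next
      case False
      then have "t \<in> {0..L}" "s \<in> {0..L}" by (auto simp: G_def indicator_def split: if_splits)
      then show ?thesis using B[of s] False 
        by (auto simp: F_def P_def abs_mult intro!: mult_left_mono)
    qed
  qed
  have fub: "(\<integral>s. (\<integral>t. F t s \<partial>lebesgue) \<partial>lebesgue) = (\<integral>t. (\<integral>s. F t s \<partial>lebesgue) \<partial>lebesgue)"
    using lebp.Fubini_integral[OF Fi] .
  have gint: "g integrable_on {0..L}" using gabs set_lebesgue_integral_eq_integral(1) by blast
  have inL: "(\<integral>t. F t s \<partial>lebesgue) = indicator {0..L} s * p' s * (f s - f 0)" for s
  proof -
    have "(\<integral>t. F t s \<partial>lebesgue) = (\<integral>t. indicator {0..L} s * p' s * (indicator {0..s} t * g t) \<partial>lebesgue)"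
      by (rule Bochner_Integration.integral_cong) (auto simp: F_def G_def indicator_def)
    also have "\<dots> = indicator {0..L} s * p' s * (\<integral>t. indicator {0..s} t * g t \<partial>lebesgue)"
      by simp
    also have "\<dots> = indicator {0..L} s * p' s * (f s - f 0)"
    proof (cases "s \<in> {0..L}")
      case True
      have si: "set_integrable lebesgue {0..s} g"
        by (rule set_integrable_subset[OF gabs]) (use True in auto)
      have "(\<integral>t. indicator {0..s} t * g t \<partial>lebesgue) = integral {0..s} g" by (rule LI[OF si])
      also have "\<dots> = f s - f 0" using fg[of 0 s] True by (auto intro: integral_unique)
      finally show ?thesis by simp
    qed simp
    finally show ?thesis .
  qed
  have inR: "(\<integral>s. F t s \<partial>lebesgue) = G t * (p L - p t)" for t
  proof -
    have "(\<integral>s. F t s \<partial>lebesgue) = G t * (\<integral>s. indicator {t..L} s * p' s \<partial>lebesgue)"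
      by (simp add: F_def)
    also have "\<dots> = G t * (p L - p t)"
    proof (cases "t \<in> {0..L}")
      case True
      have cp: "continuous_on {t..L} p'" using continuous_on_subset[OF cp'] by blast
      have si: "set_integrable lebesgue {t..L} p'"
        by (rule absolutely_integrable_continuous_real[OF cp])
      have "(\<integral>s. indicator {t..L} s * p' s \<partial>lebesgue) = integral {t..L} p'" by (rule LI[OF si])
      also have "\<dots> = p L - p t"
        using True by (intro integral_unique fundamental_theorem_of_calculus)
          (auto intro!: has_field_derivative_imp_has_derivative has_real_derivative_iff_has_vector_derivative[THEN iffD1] DERIV_subset[OF dp])
      finally show ?thesis by simp
    next
      case False then show ?thesis by (simp add: G_def)
    qed
    finally show ?thesis .
  qed
  have fcont: "continuous_on {0..L} f"
  proof -
    have "continuous_on {0..L} (\<lambda>x. f 0 + integral {0..x} g)"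
      by (intro continuous_intros indefinite_integral_continuous_1[OF gint])
    moreover have "f 0 + integral {0..x} g = f x" if "x \<in> {0..L}" for x
    proof -
      have "integral {0..x} g = f x - f 0" using fg[of 0 x] that by (simp add: integral_unique)
      then show ?thesis by simp
    qed
    ultimately show ?thesis using continuous_on_eq by blast
  qed
  have cp'L: "continuous_on {0..L} p'" using continuous_on_subset[OF cp'] by blast
  have cpL: "continuous_on {0..L} p"
    using dp by (meson DERIV_isCont continuous_at_imp_continuous_on)
  have outL: "(\<integral>s. indicator {0..L} s * p' s * (f s - f 0) \<partial>lebesgue) = integral {0..L} (\<lambda>s. p' s * (f s - f 0))"
  proof -
    have si: "set_integrable lebesgue {0..L} (\<lambda>s. p' s * (f s - f 0))"
      by (rule absolutely_integrable_continuous_real) (intro continuous_intros cp'L fcont)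
    show ?thesis using LI[OF si] by (simp add: mult.assoc)
  qed
  have gpabs: "(\<lambda>t. (p L - p t) * g t) absolutely_integrable_on {0..L}"
  proof (rule absolutely_integrable_bounded_measurable_product_real[OF _ _ _ gabs])
    show "(\<lambda>t. p L - p t) \<in> borel_measurable (lebesgue_on {0..L})"
      by (rule continuous_imp_measurable_on_sets_lebesgue) (auto intro!: continuous_intros cpL)
    show "bounded ((\<lambda>t. p L - p t) ` {0..L})"
      by (rule compact_imp_bounded, rule compact_continuous_image) (auto intro!: continuous_intros cpL)
  qed auto
  have outR: "(\<integral>t. G t * (p L - p t) \<partial>lebesgue) = integral {0..L} (\<lambda>t. (p L - p t) * g t)"
    using LI[OF gpabs] by (simp add: G_def mult_ac)
  have main: "integral {0..L} (\<lambda>s. p' s * (f s - f 0)) = integral {0..L} (\<lambda>t. (p L - p t) * g t)"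
    using fub inL inR outL outR by simp
  have i1: "(\<lambda>s. p' s * f s) integrable_on {0..L}"
    by (rule integrable_continuous_interval) (intro continuous_intros cp'L fcont)
  have i2: "p' integrable_on {0..L}" by (rule integrable_continuous_interval[OF cp'L])
  have ip': "integral {0..L} p' = p L - p 0"
    using L by (intro integral_unique fundamental_theorem_of_calculus)
          (auto intro!: has_field_derivative_imp_has_derivative has_real_derivative_iff_has_vector_derivative[THEN iffD1] DERIV_subset[OF dp])
  have ig: "integral {0..L} g = f L - f 0" using fg[OF L] by (rule integral_unique)
  have i3: "(\<lambda>t. g t * p t) integrable_on {0..L}"
  proof -
    have "(\<lambda>t. p t * g t) absolutely_integrable_on {0..L}"
    proof (rule absolutely_integrable_bounded_measurable_product_real[OF _ _ _ gabs])
      show "p \<in> borel_measurable (lebesgue_on {0..L})"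
        by (rule continuous_imp_measurable_on_sets_lebesgue) (auto intro!: cpL)
      show "bounded (p ` {0..L})"
        by (rule compact_imp_bounded, rule compact_continuous_image) (auto intro!: cpL)
    qed auto
    then show ?thesis using set_lebesgue_integral_eq_integral(1) by (simp add: mult.commute)
  qed
  have "integral {0..L} (\<lambda>s. p' s * (f s - f 0)) = integral {0..L} (\<lambda>s. p' s * f s) - f 0 * integral {0..L} p'"
  proof -
    have "integral {0..L} (\<lambda>s. p' s * (f s - f 0)) = integral {0..L} (\<lambda>s. p' s * f s - f 0 * p' s)"
      by (simp add: algebra_simps)
    also have "\<dots> = integral {0..L} (\<lambda>s. p' s * f s) - integral {0..L} (\<lambda>s. f 0 * p' s)"
      by (rule integral_diff[OF i1]) (intro integrable_on_mult_right i2)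
    finally show ?thesis by simp
  qed
  moreover have "integral {0..L} (\<lambda>t. (p L - p t) * g t) = p L * integral {0..L} g - integral {0..L} (\<lambda>t. g t * p t)"
  proof -
    have "integral {0..L} (\<lambda>t. (p L - p t) * g t) = integral {0..L} (\<lambda>t. p L * g t - g t * p t)"
      by (simp add: algebra_simps)
    also have "\<dots> = integral {0..L} (\<lambda>t. p L * g t) - integral {0..L} (\<lambda>t. g t * p t)"
      by (rule integral_diff[OF _ i3]) (intro integrable_on_mult_right gint)
    finally show ?thesis by simp
  qed
  ultimately show ?thesis using main ip' ig by (simp add: algebra_simps)
qed

lemma int_cos:
  fixes w L :: real and k :: int
  assumes w: "w > 0" and L: "L = 2*pi/w"
  shows "integral {0..L} (\<lambda>s. cos (of_int k * w * s)) = (if k = 0 then L else 0)"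
proof (cases "k = 0")
  case True
  have "L \<ge> 0" using w L by simp
  then show ?thesis using True by simp
next
  case False
  have "L \<ge> 0" using w L by simp
  have kw: "of_int k * w \<noteq> 0" using False w by simp
  have "((\<lambda>s. cos (of_int k * w * s)) has_integral (sin (of_int k * w * L) / (of_int k * w) - sin (of_int k * w * 0) / (of_int k * w))) {0..L}"
  proof (rule fundamental_theorem_of_calculus[OF \<open>L \<ge> 0\<close>])
    fix x assume "x \<in> {0..L}"
    have "((\<lambda>s. sin (of_int k * w * s) / (of_int k * w)) has_real_derivative cos (of_int k * w * x)) (at x)"
      using kw by (auto intro!: derivative_eq_intros)
    then show "((\<lambda>s. sin (of_int k * w * s) / (of_int k * w)) has_vector_derivative cos (of_int k * w * x)) (at x within {0..L})"
      by (simp add: has_real_derivative_iff_has_vector_derivative has_vector_derivative_at_within)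
  qed
  moreover have "of_int k * w * L = 2 * pi * of_int k" using w L by (simp add: field_simps)
  ultimately show ?thesis using False by (simp add: integral_unique)
qed

lemma int_sin:
  fixes w L :: real and k :: int
  assumes w: "w > 0" and L: "L = 2*pi/w"
  shows "integral {0..L} (\<lambda>s. sin (of_int k * w * s)) = 0"
proof (cases "k = 0")
  case True
  then show ?thesis by simp
next
  case False
  have "L \<ge> 0" using w L by simp
  have kw: "of_int k * w \<noteq> 0" using False w by simp
  have "((\<lambda>s. sin (of_int k * w * s)) has_integral ((- cos (of_int k * w * L) / (of_int k * w)) - (- cos (of_int k * w * 0) / (of_int k * w)))) {0..L}"
  proof (rule fundamental_theorem_of_calculus[OF \<open>L \<ge> 0\<close>])
    fix x assume "x \<in> {0..L}"
    have "((\<lambda>s. - cos (of_int k * w * s) / (of_int k * w)) has_real_derivative sin (of_int k * w * x)) (at x)"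
      using kw by (auto intro!: derivative_eq_intros)
    then show "((\<lambda>s. - cos (of_int k * w * s) / (of_int k * w)) has_vector_derivative sin (of_int k * w * x)) (at x within {0..L})"
      by (simp add: has_real_derivative_iff_has_vector_derivative has_vector_derivative_at_within)
  qed
  moreover have "of_int k * w * L = 2 * pi * of_int k" using w L by (simp add: field_simps)
  ultimately show ?thesis using False by (simp add: integral_unique)
qed

lemma cc_int:
  fixes w L :: real and a b :: nat
  assumes w: "w > 0" and L: "L = 2*pi/w"
  shows "integral {0..L} (\<lambda>s. cos (real a * w * s) * cos (real b * w * s)) = (if a = b then (if a = 0 then L else L/2) else 0)"
proof -
  have e: "(\<lambda>s. cos (real a * w * s) * cos (real b * w * s)) = (\<lambda>s. (1/2) * cos (of_int (int a - int b) * w * s) + (1/2) * cos (of_int (int a + int b) * w * s))"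
    by (auto simp: fun_eq_iff cos_diff cos_add algebra_simps)
  have i: "(\<lambda>s. cos (of_int k * w * s)) integrable_on {0..L}" for k :: int
    by (intro integrable_continuous_interval continuous_intros)
  have "integral {0..L} (\<lambda>s. cos (real a * w * s) * cos (real b * w * s)) = (1/2) * integral {0..L} (\<lambda>s. cos (of_int (int a - int b) * w * s)) + (1/2) * integral {0..L} (\<lambda>s. cos (of_int (int a + int b) * w * s))"
    unfolding e by (subst integral_add) (auto intro!: integrable_on_mult_right integrable_continuous_interval continuous_intros)
  also have "\<dots> = (if a = b then (if a = 0 then L else L/2) else 0)"
  proof -
    have A: "integral {0..L} (\<lambda>s. cos (of_int (int a - int b) * w * s)) = (if a = b then L else 0)"
      using int_cos[OF w L, of "int a - int b"] by simp
    have B: "integral {0..L} (\<lambda>s. cos (of_int (int a + int b) * w * s)) = (if a = 0 \<and> b = 0 then L else 0)"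
      using int_cos[OF w L, of "int a + int b"] by simp
    show ?thesis unfolding A B by auto
  qed
  finally show ?thesis .
qed

lemma ss_int:
  fixes w L :: real and a b :: nat
  assumes w: "w > 0" and L: "L = 2*pi/w"
  shows "integral {0..L} (\<lambda>s. sin (real a * w * s) * sin (real b * w * s)) = (if a = b \<and> a \<noteq> 0 then L/2 else 0)"
proof -
  have e: "(\<lambda>s. sin (real a * w * s) * sin (real b * w * s)) = (\<lambda>s. (1/2) * cos (of_int (int a - int b) * w * s) - (1/2) * cos (of_int (int a + int b) * w * s))"
    by (auto simp: fun_eq_iff cos_diff cos_add algebra_simps)
  have i: "(\<lambda>s. cos (of_int k * w * s)) integrable_on {0..L}" for k :: int
    by (intro integrable_continuous_interval continuous_intros)
  have "integral {0..L} (\<lambda>s. sin (real a * w * s) * sin (real b * w * s)) = (1/2) * integral {0..L} (\<lambda>s. cos (of_int (int a - int b) * w * s)) - (1/2) * integral {0..L} (\<lambda>s. cos (of_int (int a + int b) * w * s))"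
    unfolding e by (subst integral_diff) (auto intro!: integrable_on_mult_right integrable_continuous_interval continuous_intros)
  also have "\<dots> = (if a = b \<and> a \<noteq> 0 then L/2 else 0)"
  proof -
    have A: "integral {0..L} (\<lambda>s. cos (of_int (int a - int b) * w * s)) = (if a = b then L else 0)"
      using int_cos[OF w L, of "int a - int b"] by simp
    have B: "integral {0..L} (\<lambda>s. cos (of_int (int a + int b) * w * s)) = (if a = 0 \<and> b = 0 then L else 0)"
      using int_cos[OF w L, of "int a + int b"] by simp
    show ?thesis unfolding A B by auto
  qed
  finally show ?thesis .
qed

lemma cs_int:
  fixes w L :: real and a b :: nat
  assumes w: "w > 0" and L: "L = 2*pi/w"
  shows "integral {0..L} (\<lambda>s. cos (real a * w * s) * sin (real b * w * s)) = 0"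
proof -
  have e: "(\<lambda>s. cos (real a * w * s) * sin (real b * w * s)) = (\<lambda>s. (1/2) * sin (of_int (int a + int b) * w * s) - (1/2) * sin (of_int (int a - int b) * w * s))"
    by (auto simp: fun_eq_iff sin_diff sin_add algebra_simps)
  have i: "(\<lambda>s. sin (of_int k * w * s)) integrable_on {0..L}" for k :: int
    by (intro integrable_continuous_interval continuous_intros)
  have "integral {0..L} (\<lambda>s. cos (real a * w * s) * sin (real b * w * s)) = (1/2) * integral {0..L} (\<lambda>s. sin (of_int (int a + int b) * w * s)) - (1/2) * integral {0..L} (\<lambda>s. sin (of_int (int a - int b) * w * s))"
    unfolding e by (subst integral_diff) (auto intro!: integrable_on_mult_right integrable_continuous_interval continuous_intros)
  also have "\<dots> = 0"
    unfolding int_sin[OF w L] by simp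
  finally show ?thesis .
qed

definition sw :: "nat \<Rightarrow> nat" where "sw n = (if n = 0 then 0 else if odd n then n+1 else n-1)"
definition sg :: "nat \<Rightarrow> real" where "sg n = (if odd n then -1 else 1)"

lemma beta_sw: "beta (sw n) = beta n"
  unfolding sw_def beta_def by (auto elim!: oddE evenE)

lemma sg_sq: "sg n * sg n = 1" by (simp add: sg_def)

lemma sw_pos: "n \<ge> 1 \<Longrightarrow> sw n \<ge> 1" by (auto simp: sw_def)

lemma inj_sw: "inj_on sw {1..}"
  unfolding inj_on_def sw_def by (auto elim!: oddE evenE) presburger+

lemma beta0: "beta 0 = 0" by (simp add: beta_def)

locale bas =
  fixes R0 p0 :: real
  assumes R0: "R0 > 0" and p0: "p0 > -1/2"
begin

definition "q = 1 + p0"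
definition "w = 1/(R0*q)"
definition "L = Lp R0 p0"
definition "c = 1 / sqrt (2*pi*R0)"
definition "nn m = (if m = 0 then q else q/2)"

lemma q_pos: "q > 0" using p0 by (simp add: q_def)
lemma w_pos: "w > 0" using q_pos R0 by (simp add: w_def)
lemma L_eq: "L = 2*pi/w" using q_pos R0 by (simp add: w_def L_def Lp_def q_def)
lemma L_pos: "L > 0" using L_eq w_pos by simp
lemma c2L: "c * c * L = q"
  using q_pos R0 by (simp add: c_def L_def Lp_def q_def)
lemma c_pos: "c > 0" using R0 by (simp add: c_def)
lemma nn_le: "nn m \<le> q" using q_pos by (simp add: nn_def)
lemma nn_pos: "nn m > 0" using q_pos by (simp add: nn_def)

lemma e_expr: "Theta_t R0 p0 n s = c * (if n = 0 \<or> odd n then cos (beta n * w * s) else sin (beta n * w * s))"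
proof -
  have a: "beta n * (s / (1 + p0)) / R0 = beta n * w * s" using q_pos R0 by (simp add: w_def q_def field_simps)
  show ?thesis unfolding Theta_t_def Theta_def a by (simp add: c_def beta0)
qed

lemma orth: "integral {0..L} (\<lambda>s. Theta_t R0 p0 m s * Theta_t R0 p0 n s) = (if m = n then nn m else 0)"
proof -
  let ?a = "(m+1) div 2" and ?b = "(n+1) div 2"
  have ba: "beta m = real ?a" "beta n = real ?b" by (simp_all add: beta_def)
  have r: "integral {0..L} (\<lambda>s. Theta_t R0 p0 m s * Theta_t R0 p0 n s) = (c*c) * integral {0..L} (\<lambda>s. 
      (if m = 0 \<or> odd m then cos (real ?a * w * s) else sin (real ?a * w * s)) * (if n = 0 \<or> odd n then cos (real ?b * w * s) else sin (real ?b * w * s)))"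
    unfolding e_expr ba by (simp add: ac_simps)
  consider "m = 0 \<or> odd m" "n = 0 \<or> odd n" | "m = 0 \<or> odd m" "\<not> (n = 0 \<or> odd n)" | "\<not>(m = 0 \<or> odd m)" "n = 0 \<or> odd n" | "\<not>(m = 0 \<or> odd m)" "\<not> (n = 0 \<or> odd n)" by blast
  then show ?thesis
  proof cases
    case 1
    have r1: "integral {0..L} (\<lambda>s. Theta_t R0 p0 m s * Theta_t R0 p0 n s) = c*c * integral {0..L} (\<lambda>s. cos (real ?a * w * s) * cos (real ?b * w * s))"
      using r by (simp only: 1 if_True)
    have C: "integral {0..L} (\<lambda>s. cos (real ?a * w * s) * cos (real ?b * w * s)) = (if ?a = ?b then (if ?a = 0 then L else L/2) else 0)"
      by (rule cc_int[OF w_pos L_eq])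
    have "?a = ?b \<longleftrightarrow> m = n" using 1 by (auto elim!: oddE)
    moreover have "?a = 0 \<longleftrightarrow> m = 0" using 1 by (auto elim!: oddE)
    moreover have "c*c*(L/2) = q/2" using c2L by simp
    ultimately show ?thesis unfolding r1 C using c2L by (auto simp: nn_def)
  next
    case 2
    have r1: "integral {0..L} (\<lambda>s. Theta_t R0 p0 m s * Theta_t R0 p0 n s) = c*c * integral {0..L} (\<lambda>s. cos (real ?a * w * s) * sin (real ?b * w * s))"
      using r by (simp only: 2 if_True if_False)
    have C: "integral {0..L} (\<lambda>s. cos (real ?a * w * s) * sin (real ?b * w * s)) = 0"
      by (rule cs_int[OF w_pos L_eq])
    have "m \<noteq> n" using 2 by auto
    then show ?thesis unfolding r1 C by simp
  next
    case 3
    have r1: "integral {0..L} (\<lambda>s. Theta_t R0 p0 m s * Theta_t R0 p0 n s) = c*c * integral {0..L} (\<lambda>s. cos (real ?b * w * s) * sin (real ?a * w * s))"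
      using r by (simp only: 3 if_True if_False mult.commute[of "sin _"])
    have C: "integral {0..L} (\<lambda>s. cos (real ?b * w * s) * sin (real ?a * w * s)) = 0"
      by (rule cs_int[OF w_pos L_eq])
    have "m \<noteq> n" using 3 by auto
    then show ?thesis unfolding r1 C by simp
  next
    case 4
    have r1: "integral {0..L} (\<lambda>s. Theta_t R0 p0 m s * Theta_t R0 p0 n s) = c*c * integral {0..L} (\<lambda>s. sin (real ?a * w * s) * sin (real ?b * w * s))"
      using r by (simp only: 4 if_False)
    have C: "integral {0..L} (\<lambda>s. sin (real ?a * w * s) * sin (real ?b * w * s)) = (if ?a = ?b \<and> ?a \<noteq> 0 then L/2 else 0)"
      by (rule ss_int[OF w_pos L_eq])
    have "?a = ?b \<longleftrightarrow> m = n" using 4 by (auto elim!: evenE)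
    moreover have "?a \<noteq> 0" using 4 by (auto elim!: evenE)
    moreover have "c*c*(L/2) = q/2" using c2L by simp
    ultimately show ?thesis unfolding r1 C using 4 by (auto simp: nn_def)
  qed
qed

lemma e_deriv: "(Theta_t R0 p0 n has_real_derivative (sg n * beta n * w * Theta_t R0 p0 (sw n) s)) (at s)"
proof -
  consider "n = 0" | "odd n" | "even n" "n \<noteq> 0" by blast
  then show ?thesis
  proof cases
    case 1
    then show ?thesis unfolding e_expr by (simp add: beta0)
  next
    case 2
    then have s: "sw n = n + 1" "\<not> (sw n = 0 \<or> odd (sw n))" "n \<noteq> 0" by (auto simp: sw_def odd_pos)
    have bs: "beta (sw n) = beta n" by (rule beta_sw)
    show ?thesis unfolding e_expr using s 2 bs
      by (auto intro!: derivative_eq_intros simp: sg_def algebra_simps)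
  next
    case 3
    then have s: "odd (sw n)" by (auto simp: sw_def)
    have bs: "beta (sw n) = beta n" by (rule beta_sw)
    show ?thesis unfolding e_expr using s 3 bs
      by (auto intro!: derivative_eq_intros simp: sg_def algebra_simps)
  qed
qed

lemma e_cont: "continuous_on UNIV (Theta_t R0 p0 n)"
  unfolding e_expr by (cases "n = 0 \<or> odd n") (auto intro!: continuous_intros)

lemma e_bound: "\<bar>Theta_t R0 p0 n s\<bar> \<le> c"
  unfolding e_expr using c_pos by (auto simp: abs_mult)

lemma e_per: "Theta_t R0 p0 n L = Theta_t R0 p0 n 0"
proof -
  have a: "beta n * w * L = 2 * pi * beta n" using L_eq w_pos by simp
  have b: "cos (2*pi*beta n) = 1" "sin (2*pi*beta n) = 0"
    using cos_int_2pin[of "int ((n+1) div 2)"] sin_int_2pin[of "int ((n+1) div 2)"] by (simp_all add: beta_def)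
  show ?thesis unfolding e_expr a b by simp
qed

end

context bas begin

lemma e_int: "(\<lambda>s. Theta_t R0 p0 m s * Theta_t R0 p0 n s) integrable_on {0..L}"
  by (intro integrable_continuous_interval continuous_intros continuous_on_subset[OF e_cont]) auto

lemma expand:
  assumes J: "finite J" and inj: "inj_on \<sigma> J"
  shows "integral {0..L} (\<lambda>s. (\<Sum>j\<in>J. a j * Theta_t R0 p0 (\<sigma> j) s)\<^sup>2) = (\<Sum>j\<in>J. (a j)\<^sup>2 * nn (\<sigma> j))"
proof -
  have "(\<lambda>s. (\<Sum>j\<in>J. a j * Theta_t R0 p0 (\<sigma> j) s)\<^sup>2) = (\<lambda>s. \<Sum>i\<in>J. \<Sum>j\<in>J. a i * a j * (Theta_t R0 p0 (\<sigma> i) s * Theta_t R0 p0 (\<sigma> j) s))"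
    by (auto simp: fun_eq_iff power2_eq_square sum_product ac_simps)
  then have "integral {0..L} (\<lambda>s. (\<Sum>j\<in>J. a j * Theta_t R0 p0 (\<sigma> j) s)\<^sup>2) = (\<Sum>i\<in>J. \<Sum>j\<in>J. a i * a j * integral {0..L} (\<lambda>s. Theta_t R0 p0 (\<sigma> i) s * Theta_t R0 p0 (\<sigma> j) s))"
    using J by (simp add: integral_sum integrable_sum integrable_on_mult_right e_int)
  also have "\<dots> = (\<Sum>i\<in>J. \<Sum>j\<in>J. (if i = j then a i * a j * nn (\<sigma> i) else 0))"
  proof (intro sum.cong refl)
    fix i j assume "i \<in> J" "j \<in> J"
    then have "\<sigma> i = \<sigma> j \<longleftrightarrow> i = j" using inj by (auto dest: inj_onD)
    then show "a i * a j * integral {0..L} (\<lambda>s. Theta_t R0 p0 (\<sigma> i) s * Theta_t R0 p0 (\<sigma> j) s) = (if i = j then a i * a j * nn (\<sigma> i) else 0)"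
      by (simp add: orth)
  qed
  also have "\<dots> = (\<Sum>j\<in>J. (a j)\<^sup>2 * nn (\<sigma> j))"
    using J by (simp add: power2_eq_square)
  finally show ?thesis .
qed

lemma expand_le:
  assumes J: "finite J" and inj: "inj_on \<sigma> J"
  shows "integral {0..L} (\<lambda>s. (\<Sum>j\<in>J. a j * Theta_t R0 p0 (\<sigma> j) s)\<^sup>2) \<le> q * (\<Sum>j\<in>J. (a j)\<^sup>2)"
proof -
  have "(\<Sum>j\<in>J. (a j)\<^sup>2 * nn (\<sigma> j)) \<le> (\<Sum>j\<in>J. q * (a j)\<^sup>2)"
    by (intro sum_mono) (metis mult.commute mult_right_mono nn_le zero_le_power2)
  then show ?thesis using expand[OF assms] by (simp add: sum_distrib_left)
qed

lemma bessel:
  assumes S: "finite S"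
  and F2: "(\<lambda>s. (F s)\<^sup>2) integrable_on {0..L}"
  and Fe: "\<And>m. m \<in> S \<Longrightarrow> (\<lambda>s. F s * Theta_t R0 p0 m s) integrable_on {0..L}"
  shows "(\<Sum>m\<in>S. (integral {0..L} (\<lambda>s. F s * Theta_t R0 p0 m s))\<^sup>2) \<le> q * integral {0..L} (\<lambda>s. (F s)\<^sup>2)"
proof -
  define cm where "cm m = integral {0..L} (\<lambda>s. F s * Theta_t R0 p0 m s)" for m
  define P where "P s = (\<Sum>m\<in>S. (cm m / nn m) * Theta_t R0 p0 m s)" for s
  have Pc: "continuous_on {0..L} P"
    unfolding P_def by (intro continuous_intros continuous_on_subset[OF e_cont]) auto
  have P2: "(\<lambda>s. (P s)\<^sup>2) integrable_on {0..L}"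
    by (intro integrable_continuous_interval continuous_intros Pc)
  have FPe: "(\<lambda>s. F s * P s) = (\<lambda>s. \<Sum>m\<in>S. (cm m / nn m) * (F s * Theta_t R0 p0 m s))"
    by (auto simp: fun_eq_iff P_def sum_distrib_left ac_simps)
  have FP: "(\<lambda>s. F s * P s) integrable_on {0..L}"
    unfolding FPe using S Fe by (intro integrable_sum integrable_on_mult_right) auto
  have iFP: "integral {0..L} (\<lambda>s. F s * P s) = (\<Sum>m\<in>S. (cm m)\<^sup>2 / nn m)"
  proof -
    have "integral {0..L} (\<lambda>s. \<Sum>m\<in>S. (cm m / nn m) * (F s * Theta_t R0 p0 m s)) = (\<Sum>m\<in>S. integral {0..L} (\<lambda>s. (cm m / nn m) * (F s * Theta_t R0 p0 m s)))"
      by (rule integral_sum[OF S]) (intro integrable_on_mult_right Fe)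
    also have "\<dots> = (\<Sum>m\<in>S. (cm m)\<^sup>2 / nn m)"
      by (intro sum.cong refl) (simp add: cm_def power2_eq_square)
    finally show ?thesis unfolding FPe .
  qed
  have iP2: "integral {0..L} (\<lambda>s. (P s)\<^sup>2) = (\<Sum>m\<in>S. (cm m)\<^sup>2 / nn m)"
  proof -
    have "integral {0..L} (\<lambda>s. (P s)\<^sup>2) = (\<Sum>m\<in>S. (cm m / nn m)\<^sup>2 * nn (id m))"
      unfolding P_def using expand[OF S, of id "\<lambda>m. cm m / nn m"] by simp
    also have "\<dots> = (\<Sum>m\<in>S. (cm m)\<^sup>2 / nn m)"
      using nn_pos by (intro sum.cong refl) (simp add: power2_eq_square field_simps)
    finally show ?thesis .
  qed
  have e2: "(\<lambda>s. (F s - P s)\<^sup>2) = (\<lambda>s. ((F s)\<^sup>2 - 2 * (F s * P s)) + (P s)\<^sup>2)"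
    by (auto simp: fun_eq_iff power2_eq_square algebra_simps)
  have i1: "(\<lambda>s. (F s)\<^sup>2 - 2 * (F s * P s)) integrable_on {0..L}"
    by (intro integrable_diff F2 integrable_on_mult_right FP)
  have "0 \<le> integral {0..L} (\<lambda>s. (F s - P s)\<^sup>2)"
    by (rule integral_nonneg) (auto simp: e2 intro!: integrable_add i1 P2)
  also have "\<dots> = integral {0..L} (\<lambda>s. (F s)\<^sup>2) - 2 * integral {0..L} (\<lambda>s. F s * P s) + integral {0..L} (\<lambda>s. (P s)\<^sup>2)"
    unfolding e2 by (simp add: integral_add[OF i1 P2] integral_diff[OF F2 integrable_on_mult_right[OF FP]])
  finally have le: "(\<Sum>m\<in>S. (cm m)\<^sup>2 / nn m) \<le> integral {0..L} (\<lambda>s. (F s)\<^sup>2)"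
    unfolding iFP iP2 by simp
  have "(\<Sum>m\<in>S. (cm m)\<^sup>2) \<le> (\<Sum>m\<in>S. q * ((cm m)\<^sup>2 / nn m))"
  proof (intro sum_mono)
    fix m
    have "(cm m)\<^sup>2 = nn m * ((cm m)\<^sup>2 / nn m)" using nn_pos[of m] by simp
    also have "\<dots> \<le> q * ((cm m)\<^sup>2 / nn m)"
      using nn_le[of m] nn_pos[of m] by (intro mult_right_mono) auto
    finally show "(cm m)\<^sup>2 \<le> q * ((cm m)\<^sup>2 / nn m)" .
  qed
  also have "\<dots> \<le> q * integral {0..L} (\<lambda>s. (F s)\<^sup>2)"
  proof -
    have "(\<Sum>m\<in>S. q * ((cm m)\<^sup>2 / nn m)) = q * (\<Sum>m\<in>S. (cm m)\<^sup>2 / nn m)"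
      by (rule sum_distrib_left[symmetric])
    then show ?thesis using le q_pos by (simp only:) (rule mult_left_mono, auto)
  qed
  finally show ?thesis by (simp add: cm_def)
qed

end

lemma factor:
  fixes M :: "nat \<Rightarrow> nat \<Rightarrow> real"
  assumes K: "finite K" and J: "finite J" and l: "l \<ge> 0"
  and b: "\<And>x. (\<Sum>k\<in>K. (\<Sum>j\<in>J. M k j * x j)\<^sup>2) \<le> l\<^sup>2 * (\<Sum>j\<in>J. (x j)\<^sup>2)"
  shows "\<exists>E. opnorm_le1 K J E \<and> (\<forall>k\<in>K. \<forall>j\<in>J. M k j = l * E k j)"
proof (cases "l = 0")
  case True
  have z: "M k j = 0" if "k \<in> K" "j \<in> J" for k j
  proof -
    have "(\<Sum>k\<in>K. (\<Sum>i\<in>J. M k i * (if i = j then 1 else 0))\<^sup>2) \<le> 0"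
      using b[of "\<lambda>i. if i = j then 1 else 0"] True by simp
    then have "(\<Sum>k\<in>K. (M k j)\<^sup>2) \<le> 0" using that J by (simp add: if_distrib cong: if_cong)
    then have "(\<Sum>k\<in>K. (M k j)\<^sup>2) = 0"
      by (intro order.antisym sum_nonneg) auto
    then have "\<forall>k\<in>K. (M k j)\<^sup>2 = 0"
      using K by (subst (asm) sum_nonneg_eq_0_iff) auto
    then show ?thesis using that by simp
  qed
  show ?thesis
    by (rule exI[of _ "\<lambda>k j. 0"]) (auto simp: opnorm_le1_def z intro: sum_nonneg)
next
  case False
  then have lp: "l > 0" using l by simp
  show ?thesis
  proof (rule exI[of _ "\<lambda>k j. M k j / l"], intro conjI)
    show "\<forall>k\<in>K. \<forall>j\<in>J. M k j = l * (M k j / l)" using lp by simp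
    show "opnorm_le1 K J (\<lambda>k j. M k j / l)"
      unfolding opnorm_le1_def
    proof
      fix x :: "nat \<Rightarrow> real"
      have "(\<Sum>k\<in>K. (\<Sum>j\<in>J. M k j / l * x j)\<^sup>2) = (\<Sum>k\<in>K. (\<Sum>j\<in>J. M k j * x j)\<^sup>2) / l\<^sup>2"
        by (simp add: sum_divide_distrib[symmetric] power_divide)
      also have "\<dots> \<le> (l\<^sup>2 * (\<Sum>j\<in>J. (x j)\<^sup>2)) / l\<^sup>2"
        using b[of x] lp by (intro divide_right_mono) auto
      also have "\<dots> = (\<Sum>j\<in>J. (x j)\<^sup>2)" using lp by simp
      finally show "(\<Sum>k\<in>K. (\<Sum>j\<in>J. M k j / l * x j)\<^sup>2) \<le> (\<Sum>j\<in>J. (x j)\<^sup>2)" .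
    qed
  qed
qed

context bas begin

lemma bmp:
  fixes u v :: "real \<Rightarrow> real" and U :: real
  assumes um: "u \<in> borel_measurable (lebesgue_on {0..L})" and ub: "\<And>s. s \<in> {0..L} \<Longrightarrow> \<bar>u s\<bar> \<le> U"
  and v: "continuous_on {0..L} v"
  shows "(\<lambda>s. u s * v s) integrable_on {0..L}"
proof -
  have "bounded (u ` {0..L})" unfolding bounded_iff by (rule exI[of _ U]) (use ub in auto)
  then have "(\<lambda>s. u s * v s) absolutely_integrable_on {0..L}"
    by (intro absolutely_integrable_bounded_measurable_product_real[OF um] absolutely_integrable_continuous_real v) auto
  then show ?thesis using set_lebesgue_integral_eq_integral(1) by blast
qed

lemma opb:
  fixes u :: "real \<Rightarrow> real" and U :: real
  assumes K: "finite K" "K \<subseteq> {1..}" and J: "finite J" and inj: "inj_on \<sigma> J"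
  and um: "u \<in> borel_measurable (lebesgue_on {0..L})" and ub: "\<And>s. s \<in> {0..L} \<Longrightarrow> \<bar>u s\<bar> \<le> U"
  shows "(\<Sum>k\<in>K. (\<Sum>j\<in>J. integral {0..L} (\<lambda>s. u s * Theta_t R0 p0 (\<sigma> j) s * Theta_t R0 p0 (sw k) s) * x j)\<^sup>2) \<le> (q*U)\<^sup>2 * (\<Sum>j\<in>J. (x j)\<^sup>2)"
proof -
  define h where "h s = (\<Sum>j\<in>J. x j * Theta_t R0 p0 (\<sigma> j) s)" for s
  define F where "F s = u s * h s" for s
  have ec: "continuous_on {0..L} (Theta_t R0 p0 n)" for n using continuous_on_subset[OF e_cont] by blast
  have hc: "continuous_on {0..L} h" unfolding h_def by (intro continuous_intros ec)
  have U0: "U \<ge> 0" using ub[of 0] L_pos by auto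
  have a: "(\<Sum>j\<in>J. integral {0..L} (\<lambda>s. u s * Theta_t R0 p0 (\<sigma> j) s * Theta_t R0 p0 (sw k) s) * x j) = integral {0..L} (\<lambda>s. F s * Theta_t R0 p0 (sw k) s)" for k
  proof -
    have "integral {0..L} (\<lambda>s. F s * Theta_t R0 p0 (sw k) s) = integral {0..L} (\<lambda>s. \<Sum>j\<in>J. x j * (u s * Theta_t R0 p0 (\<sigma> j) s * Theta_t R0 p0 (sw k) s))"
    proof (rule arg_cong[where f="integral {0..L}"], rule ext)
      fix s
      have "F s * Theta_t R0 p0 (sw k) s = (\<Sum>j\<in>J. u s * (x j * Theta_t R0 p0 (\<sigma> j) s) * Theta_t R0 p0 (sw k) s)"
        unfolding F_def h_def sum_distrib_left sum_distrib_right ..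
      also have "\<dots> = (\<Sum>j\<in>J. x j * (u s * Theta_t R0 p0 (\<sigma> j) s * Theta_t R0 p0 (sw k) s))"
        by (intro sum.cong refl) (simp only: mult.assoc mult.left_commute)
      finally show "F s * Theta_t R0 p0 (sw k) s = (\<Sum>j\<in>J. x j * (u s * Theta_t R0 p0 (\<sigma> j) s * Theta_t R0 p0 (sw k) s))" .
    qed
    also have "\<dots> = (\<Sum>j\<in>J. integral {0..L} (\<lambda>s. x j * (u s * Theta_t R0 p0 (\<sigma> j) s * Theta_t R0 p0 (sw k) s)))"
      by (rule integral_sum[OF J]) (unfold mult.assoc, intro integrable_on_mult_right bmp[OF um ub] continuous_intros ec)
    also have "\<dots> = (\<Sum>j\<in>J. integral {0..L} (\<lambda>s. u s * Theta_t R0 p0 (\<sigma> j) s * Theta_t R0 p0 (sw k) s) * x j)"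
    proof (intro sum.cong refl)
      fix j
      show "integral {0..L} (\<lambda>s. x j * (u s * Theta_t R0 p0 (\<sigma> j) s * Theta_t R0 p0 (sw k) s)) = integral {0..L} (\<lambda>s. u s * Theta_t R0 p0 (\<sigma> j) s * Theta_t R0 p0 (sw k) s) * x j"
        by (subst integral_mult_right) (rule mult.commute)
    qed
    finally show ?thesis by simp
  qed
  have F2: "(\<lambda>s. (F s)\<^sup>2) integrable_on {0..L}"
  proof -
    have "(\<lambda>s. (u s)\<^sup>2 * (h s)\<^sup>2) integrable_on {0..L}"
    proof (rule bmp)
      show "(\<lambda>s. (u s)\<^sup>2) \<in> borel_measurable (lebesgue_on {0..L})" using um by measurable
      show "\<bar>(u s)\<^sup>2\<bar> \<le> U\<^sup>2" if "s \<in> {0..L}" for s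
      proof -
        have "\<bar>u s\<bar>\<^sup>2 \<le> U\<^sup>2" using ub[OF that] by (intro power_mono) auto
        then show ?thesis by simp
      qed
      show "continuous_on {0..L} (\<lambda>s. (h s)\<^sup>2)" by (intro continuous_intros hc)
    qed
    then show ?thesis by (simp add: F_def power_mult_distrib)
  qed
  have Fe: "(\<lambda>s. F s * Theta_t R0 p0 m s) integrable_on {0..L}" for m
    unfolding F_def mult.assoc by (rule bmp[OF um ub]) (auto intro!: continuous_intros hc ec)
  have injK: "inj_on sw K" using inj_sw K(2) inj_on_subset by blast
  have "(\<Sum>k\<in>K. (\<Sum>j\<in>J. integral {0..L} (\<lambda>s. u s * Theta_t R0 p0 (\<sigma> j) s * Theta_t R0 p0 (sw k) s) * x j)\<^sup>2)
      = (\<Sum>m\<in>sw ` K. (integral {0..L} (\<lambda>s. F s * Theta_t R0 p0 m s))\<^sup>2)"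
    unfolding a by (simp add: sum.reindex[OF injK])
  also have "\<dots> \<le> q * integral {0..L} (\<lambda>s. (F s)\<^sup>2)"
    by (rule bessel[OF finite_imageI[OF K(1)] F2 Fe])
  also have "\<dots> \<le> q * (U\<^sup>2 * (q * (\<Sum>j\<in>J. (x j)\<^sup>2)))"
  proof (rule mult_left_mono[OF _ less_imp_le[OF q_pos]])
    have "integral {0..L} (\<lambda>s. (F s)\<^sup>2) \<le> integral {0..L} (\<lambda>s. U\<^sup>2 * (h s)\<^sup>2)"
    proof (rule integral_le[OF F2])
      show "(\<lambda>s. U\<^sup>2 * (h s)\<^sup>2) integrable_on {0..L}"
        by (intro integrable_continuous_interval continuous_intros hc)
      fix s assume "s \<in> {0..L}"
      then have "(u s)\<^sup>2 \<le> U\<^sup>2" using ub by (metis abs_ge_zero power2_abs power_mono)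
      then show "(F s)\<^sup>2 \<le> U\<^sup>2 * (h s)\<^sup>2" by (simp add: F_def power_mult_distrib mult_right_mono)
    qed
    also have "\<dots> = U\<^sup>2 * integral {0..L} (\<lambda>s. (h s)\<^sup>2)" by simp
    also have "\<dots> \<le> U\<^sup>2 * (q * (\<Sum>j\<in>J. (x j)\<^sup>2))"
      unfolding h_def by (intro mult_left_mono expand_le[OF J inj]) auto
    finally show "integral {0..L} (\<lambda>s. (F s)\<^sup>2) \<le> U\<^sup>2 * (q * (\<Sum>j\<in>J. (x j)\<^sup>2))" .
  qed
  also have "\<dots> = (q*U)\<^sup>2 * (\<Sum>j\<in>J. (x j)\<^sup>2)" by (simp add: power2_eq_square)
  finally show ?thesis .
qed

end

lemma sw_sw: "n \<ge> 1 \<Longrightarrow> sw (sw n) = n" by (auto simp: sw_def)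

lemma AE_negl:
  assumes "AE x in lborel. P x"
  shows "negligible {x::real. \<not> P x}"
proof -
  obtain N where N: "{x \<in> space lborel. \<not> P x} \<subseteq> N" "emeasure lborel N = 0" "N \<in> sets lborel"
    using assms by (rule AE_E)
  have "N \<in> null_sets lborel" using N by auto
  then have "{x::real. \<not> P x} \<in> null_sets (completion lborel)"
    using N(1) by (subst null_sets_completion_iff2) auto
  then show ?thesis by (simp add: negligible_iff_null_sets)
qed

lemma fcont:
  fixes f g :: "real \<Rightarrow> real"
  assumes fg: "\<And>a b. a \<le> b \<Longrightarrow> (g has_integral (f b - f a)) {a..b}" and L: "0 \<le> L"
  shows "continuous_on {0..L} f"
proof -
  have gint: "g integrable_on {0..L}" using fg[OF L] by blast
  have "continuous_on {0..L} (\<lambda>x. f 0 + integral {0..x} g)"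
    by (intro continuous_intros indefinite_integral_continuous_1[OF gint])
  moreover have "f 0 + integral {0..x} g = f x" if "x \<in> {0..L}" for x
  proof -
    have "integral {0..x} g = f x - f 0" using fg[of 0 x] that by (simp add: integral_unique)
    then show ?thesis by simp
  qed
  ultimately show ?thesis using continuous_on_eq by blast
qed

context bas begin

lemma ibp_e:
  fixes f g :: "real \<Rightarrow> real"
  assumes per: "\<forall>x. f (x + L) = f x"
  and fg: "\<And>a b. a \<le> b \<Longrightarrow> (g has_integral (f b - f a)) {a..b}"
  and gabs: "g absolutely_integrable_on {0..L}"
  and dp: "\<And>x. (p has_real_derivative p' x) (at x)"
  and cp': "continuous_on UNIV p'"
  and pper: "p L = p 0"
  shows "integral {0..L} (\<lambda>s. p' s * f s) = - integral {0..L} (\<lambda>t. g t * p t)"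
proof -
  have "f L = f 0" using per[rule_format, of 0] by simp
  then show ?thesis using ibp[OF less_imp_le[OF L_pos] fg gabs dp cp'] pper by simp
qed

lemma part1: "\<exists>C. \<forall>N1::nat. \<forall>f g. N1 \<ge> 4 \<longrightarrow> H1_circle (Lp R0 p0) f g \<longrightarrow>
            sqrt (\<Sum>k\<in>{3..N1-1}.
                    (integral {0..Lp R0 p0} (\<lambda>s. f s * (beta k * Theta_t R0 p0 k s)))\<^sup>2)
            \<le> C * L2norm_circle (Lp R0 p0) g"
proof (intro exI[of _ "sqrt q / w"] allI impI)
  fix N1 :: nat and f g :: "real \<Rightarrow> real"
  assume N1: "N1 \<ge> 4" and H: "H1_circle (Lp R0 p0) f g"
  define K where "K = {3..N1-1}"
  have per: "\<forall>x. f (x + L) = f x" and fg: "\<And>a b. a \<le> b \<Longrightarrow> (g has_integral (f b - f a)) {a..b}"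
    and g2: "(\<lambda>x. (g x)\<^sup>2) integrable_on {0..L}"
    using H unfolding H1_circle_def periodic_with_deriv_def L_def by auto
  have gint: "g integrable_on {0..L}" using fg[OF less_imp_le[OF L_pos]] by blast
  have gm: "g \<in> borel_measurable (lebesgue_on {0..L})" by (rule integrable_imp_measurable[OF gint])
  have gabs: "g absolutely_integrable_on {0..L}"
  proof (rule measurable_bounded_by_integrable_imp_absolutely_integrable[OF gm])
    have "(\<lambda>x. 1 + (g x)\<^sup>2) integrable_on {0..L}" by (rule integrable_add[OF _ g2]) auto
    then have "(\<lambda>x. (1 + (g x)\<^sup>2) * (1/2)) integrable_on {0..L}" by (rule integrable_on_mult_left)
    then show "(\<lambda>x. (1 + (g x)\<^sup>2) / 2) integrable_on {0..L}" by simp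
    show "norm (g x) \<le> (1 + (g x)\<^sup>2) / 2" for x
    proof -
      have "0 \<le> (\<bar>g x\<bar> - 1)\<^sup>2" by simp
      then show ?thesis by (simp add: power2_eq_square algebra_simps)
    qed
  qed auto
  have ge: "(\<lambda>s. g s * Theta_t R0 p0 m s) integrable_on {0..L}" for m
  proof -
    have "(\<lambda>s. Theta_t R0 p0 m s * g s) absolutely_integrable_on {0..L}"
    proof (rule absolutely_integrable_bounded_measurable_product_real[OF _ _ _ gabs])
      show "Theta_t R0 p0 m \<in> borel_measurable (lebesgue_on {0..L})"
        by (rule continuous_imp_measurable_on_sets_lebesgue) (auto intro: continuous_on_subset[OF e_cont])
      show "bounded (Theta_t R0 p0 m ` {0..L})"
        unfolding bounded_iff by (rule exI[of _ c]) (use e_bound in auto)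
    qed auto
    then show ?thesis using set_lebesgue_integral_eq_integral(1) by (simp add: mult.commute)
  qed
  have key: "(integral {0..L} (\<lambda>s. f s * (beta k * Theta_t R0 p0 k s)))\<^sup>2 = (integral {0..L} (\<lambda>s. g s * Theta_t R0 p0 (sw k) s))\<^sup>2 / w\<^sup>2"
    if "k \<in> K" for k
  proof -
    have k1: "k \<ge> 1" using that by (simp add: K_def)
    have dp: "(Theta_t R0 p0 (sw k) has_real_derivative (sg (sw k) * beta k * w * Theta_t R0 p0 k s)) (at s)" for s
      using e_deriv[of "sw k" s] by (simp add: beta_sw sw_sw[OF k1])
    have cp': "continuous_on UNIV (\<lambda>s. sg (sw k) * beta k * w * Theta_t R0 p0 k s)"
      by (intro continuous_intros e_cont)
    have I: "integral {0..L} (\<lambda>s. sg (sw k) * beta k * w * Theta_t R0 p0 k s * f s) = - integral {0..L} (\<lambda>t. g t * Theta_t R0 p0 (sw k) t)"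
      by (rule ibp_e[OF per fg gabs dp cp' e_per])
    have "integral {0..L} (\<lambda>s. sg (sw k) * beta k * w * Theta_t R0 p0 k s * f s) = (sg (sw k) * w) * integral {0..L} (\<lambda>s. f s * (beta k * Theta_t R0 p0 k s))"
      by (subst integral_mult_right[symmetric]) (simp add: ac_simps)
    then have "(sg (sw k) * w) * integral {0..L} (\<lambda>s. f s * (beta k * Theta_t R0 p0 k s)) = - integral {0..L} (\<lambda>t. g t * Theta_t R0 p0 (sw k) t)"
      using I by simp
    then have "((sg (sw k) * w) * integral {0..L} (\<lambda>s. f s * (beta k * Theta_t R0 p0 k s)))\<^sup>2 = (integral {0..L} (\<lambda>t. g t * Theta_t R0 p0 (sw k) t))\<^sup>2"
      by simp
    then have "w\<^sup>2 * (integral {0..L} (\<lambda>s. f s * (beta k * Theta_t R0 p0 k s)))\<^sup>2 = (integral {0..L} (\<lambda>t. g t * Theta_t R0 p0 (sw k) t))\<^sup>2"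
      by (simp add: power_mult_distrib power2_eq_square[of "sg _"] sg_sq)
    then show ?thesis using w_pos by (simp add: field_simps)
  qed
  have injK: "inj_on sw K" using inj_sw by (rule inj_on_subset) (auto simp: K_def)
  have "(\<Sum>k\<in>K. (integral {0..L} (\<lambda>s. f s * (beta k * Theta_t R0 p0 k s)))\<^sup>2) = (\<Sum>k\<in>K. (integral {0..L} (\<lambda>s. g s * Theta_t R0 p0 (sw k) s))\<^sup>2) / w\<^sup>2"
    using key by (simp add: sum_divide_distrib)
  also have "\<dots> = (\<Sum>m\<in>sw ` K. (integral {0..L} (\<lambda>s. g s * Theta_t R0 p0 m s))\<^sup>2) / w\<^sup>2"
    by (simp add: sum.reindex[OF injK])
  also have "\<dots> \<le> (q * integral {0..L} (\<lambda>s. (g s)\<^sup>2)) / w\<^sup>2"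
    by (intro divide_right_mono bessel g2 ge) (auto simp: K_def)
  finally have le: "(\<Sum>k\<in>K. (integral {0..L} (\<lambda>s. f s * (beta k * Theta_t R0 p0 k s)))\<^sup>2) \<le> (sqrt q / w)\<^sup>2 * integral {0..L} (\<lambda>s. (g s)\<^sup>2)"
    using q_pos by (simp add: power_divide)
  have i0: "integral {0..L} (\<lambda>s. (g s)\<^sup>2) \<ge> 0" by (rule integral_nonneg[OF g2]) auto
  have "sqrt (\<Sum>k\<in>K. (integral {0..L} (\<lambda>s. f s * (beta k * Theta_t R0 p0 k s)))\<^sup>2) \<le> sqrt ((sqrt q / w)\<^sup>2 * integral {0..L} (\<lambda>s. (g s)\<^sup>2))"
    by (rule real_sqrt_le_mono[OF le])
  also have "\<dots> = sqrt q / w * L2norm_circle L g"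
    using w_pos q_pos by (simp add: L2norm_circle_def real_sqrt_mult)
  finally show "sqrt (\<Sum>k\<in>{3..N1-1}. (integral {0..Lp R0 p0} (\<lambda>s. f s * (beta k * Theta_t R0 p0 k s)))\<^sup>2)
            \<le> sqrt q / w * L2norm_circle (Lp R0 p0) g" by (simp add: K_def L_def)
qed

end

context bas begin

lemma part2_aux:
  fixes N1 :: nat and f g :: "real \<Rightarrow> real" and Mf Mg :: real
  assumes N1: "N1 \<ge> 4" and P: "periodic_with_deriv (Lp R0 p0) f g"
    and fb: "\<forall>x. \<bar>f x\<bar> \<le> Mf" and gb: "AE x in lborel. \<bar>g x\<bar> \<le> Mg"
  shows "\<exists>a1 a2 E1 E2.
               opnorm_le1 {3..N1-1} {0..N1-1} E1 \<and> opnorm_le1 {3..N1-1} {0..N1-1} E2 \<and>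
               \<bar>a1\<bar> \<le> (q / w + q) * Mg \<and> \<bar>a2\<bar> \<le> (q / w + q) * Mf \<and>
               (\<forall>k\<in>{3..N1-1}. \<forall>j\<in>{0..N1-1}.
                  integral {0..Lp R0 p0} (\<lambda>s. f s * Theta_t R0 p0 j s * (beta k * Theta_t R0 p0 k s))
                  = a1 * E1 k j + a2 * beta j * E2 k j)"
proof -
  define K where "K = {3..N1-1}"
  define J where "J = {0..N1-1}"
  have per: "\<forall>x. f (x + L) = f x" and fg: "\<And>a b. a \<le> b \<Longrightarrow> (g has_integral (f b - f a)) {a..b}"
    using P unfolding periodic_with_deriv_def L_def by auto
  have negN: "negligible {x. \<not> \<bar>g x\<bar> \<le> Mg}" by (rule AE_negl[OF gb])
  have Mg0: "Mg \<ge> 0"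
  proof (rule ccontr)
    assume "\<not> Mg \<ge> 0"
    then have "{x. \<not> \<bar>g x\<bar> \<le> Mg} = UNIV" by auto
    then show False using negN by simp
  qed
  have Mf0: "Mf \<ge> 0" using fb[rule_format, of 0] by simp
  define g' where "g' x = (if \<bar>g x\<bar> \<le> Mg then g x else 0)" for x
  have fg': "(g' has_integral (f b - f a)) {a..b}" if "a \<le> b" for a b
    by (rule has_integral_spike[OF negN _ fg[OF that]]) (auto simp: g'_def)
  have g'b: "\<bar>g' x\<bar> \<le> Mg" for x using Mg0 by (simp add: g'_def)
  have g'int: "g' integrable_on {0..L}" using fg'[OF less_imp_le[OF L_pos]] by blast
  have g'm: "g' \<in> borel_measurable (lebesgue_on {0..L})" by (rule integrable_imp_measurable[OF g'int])
  have g'abs: "g' absolutely_integrable_on {0..L}"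
    by (rule measurable_bounded_by_integrable_imp_absolutely_integrable[OF g'm, where g="\<lambda>_. Mg"]) (auto simp: g'b)
  have fc: "continuous_on {0..L} f" by (rule fcont[OF fg less_imp_le[OF L_pos]])
  have fm: "f \<in> borel_measurable (lebesgue_on {0..L})"
    by (rule continuous_imp_measurable_on_sets_lebesgue[OF fc]) auto
  have ec: "continuous_on {0..L} (Theta_t R0 p0 n)" for n using continuous_on_subset[OF e_cont] by blast
  define A where "A k j = integral {0..L} (\<lambda>s. g' s * Theta_t R0 p0 (id j) s * Theta_t R0 p0 (sw k) s)" for k j
  define B where "B k j = integral {0..L} (\<lambda>s. f s * Theta_t R0 p0 (sw j) s * Theta_t R0 p0 (sw k) s)" for k j
  define M1 where "M1 k j = - (sg (sw k) / w) * A k j" for k j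
  define M2 where "M2 k j = (if j = 0 then 0 else - (sg (sw k) * sg j) * B k j)" for k j
  have ident: "integral {0..L} (\<lambda>s. f s * Theta_t R0 p0 j s * (beta k * Theta_t R0 p0 k s)) = M1 k j + beta j * M2 k j"
    if "k \<in> K" for k j
  proof -
    have k1: "k \<ge> 1" using that by (simp add: K_def)
    define p where "p s = Theta_t R0 p0 j s * Theta_t R0 p0 (sw k) s" for s
    define p' where "p' s = sg j * beta j * w * Theta_t R0 p0 (sw j) s * Theta_t R0 p0 (sw k) s + sg (sw k) * beta k * w * Theta_t R0 p0 k s * Theta_t R0 p0 j s" for s
    have dp: "(p has_real_derivative p' s) (at s)" for s
    proof -
      have "((\<lambda>s. Theta_t R0 p0 j s * Theta_t R0 p0 (sw k) s) has_real_derivative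
          (sg j * beta j * w * Theta_t R0 p0 (sw j) s) * Theta_t R0 p0 (sw k) s + (sg (sw k) * beta (sw k) * w * Theta_t R0 p0 (sw (sw k)) s) * Theta_t R0 p0 j s) (at s)"
        by (rule DERIV_mult[OF e_deriv e_deriv])
      then show ?thesis unfolding p_def p'_def by (simp add: beta_sw sw_sw[OF k1])
    qed
    have cp': "continuous_on UNIV p'" unfolding p'_def by (intro continuous_intros e_cont)
    have pper: "p L = p 0" unfolding p_def by (simp add: e_per)
    have I: "integral {0..L} (\<lambda>s. p' s * f s) = - integral {0..L} (\<lambda>t. g' t * p t)"
      by (rule ibp_e[OF per fg' g'abs dp cp' pper])
    define I1 where "I1 = integral {0..L} (\<lambda>s. f s * Theta_t R0 p0 j s * (beta k * Theta_t R0 p0 k s))"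
    have i1: "(\<lambda>s. (sg j * beta j * w) * (f s * Theta_t R0 p0 (sw j) s * Theta_t R0 p0 (sw k) s)) integrable_on {0..L}"
      by (intro integrable_continuous_interval continuous_intros fc ec)
    have i2: "(\<lambda>s. (sg (sw k) * w) * (f s * Theta_t R0 p0 j s * (beta k * Theta_t R0 p0 k s))) integrable_on {0..L}"
      by (intro integrable_continuous_interval continuous_intros fc ec)
    have "integral {0..L} (\<lambda>s. p' s * f s) = integral {0..L} (\<lambda>s. (sg j * beta j * w) * (f s * Theta_t R0 p0 (sw j) s * Theta_t R0 p0 (sw k) s) + (sg (sw k) * w) * (f s * Theta_t R0 p0 j s * (beta k * Theta_t R0 p0 k s)))"
      by (rule arg_cong[where f="integral {0..L}"]) (auto simp: fun_eq_iff p'_def algebra_simps)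
    also have "\<dots> = (sg j * beta j * w) * B k j + (sg (sw k) * w) * I1"
      unfolding integral_add[OF i1 i2] by (simp add: B_def I1_def)
    finally have E1: "integral {0..L} (\<lambda>s. p' s * f s) = (sg j * beta j * w) * B k j + (sg (sw k) * w) * I1" .
    have E2: "integral {0..L} (\<lambda>t. g' t * p t) = A k j"
      unfolding A_def p_def by (simp add: mult.assoc)
    have "(sg (sw k) * w) * I1 = - A k j - (sg j * beta j * w) * B k j" using I E1 E2 by simp
    then have "sg (sw k) * ((sg (sw k) * w) * I1) = sg (sw k) * (- A k j - (sg j * beta j * w) * B k j)" by simp
    then have "w * I1 = sg (sw k) * (- A k j - (sg j * beta j * w) * B k j)"
      by (simp add: mult.assoc[symmetric] sg_sq)
    then have "I1 = (sg (sw k) * (- A k j - (sg j * beta j * w) * B k j)) / w"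
      using w_pos by (simp add: field_simps)
    also have "\<dots> = M1 k j + beta j * M2 k j"
      using w_pos by (cases "j = 0") (simp_all add: M1_def M2_def beta0 field_simps)
    finally show ?thesis by (simp add: I1_def)
  qed
  have Kf: "finite K" "K \<subseteq> {1..}" by (auto simp: K_def)
  have Jf: "finite J" by (simp add: J_def)
  have b1: "(\<Sum>k\<in>K. (\<Sum>j\<in>J. M1 k j * x j)\<^sup>2) \<le> (q * Mg / w)\<^sup>2 * (\<Sum>j\<in>J. (x j)\<^sup>2)" for x
  proof -
    have "(\<Sum>k\<in>K. (\<Sum>j\<in>J. M1 k j * x j)\<^sup>2) = (\<Sum>k\<in>K. (\<Sum>j\<in>J. A k j * x j)\<^sup>2) / w\<^sup>2"
    proof -
      have "(\<Sum>j\<in>J. M1 k j * x j)\<^sup>2 = (\<Sum>j\<in>J. A k j * x j)\<^sup>2 / w\<^sup>2" for k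
      proof -
        have "(\<Sum>j\<in>J. M1 k j * x j) = - (sg (sw k) / w) * (\<Sum>j\<in>J. A k j * x j)"
          by (simp add: M1_def sum_distrib_left mult.assoc)
        then show ?thesis by (simp add: power_mult_distrib power_divide power2_eq_square[of "sg _"] sg_sq)
      qed
      then show ?thesis by (simp add: sum_divide_distrib)
    qed
    also have "\<dots> \<le> ((q*Mg)\<^sup>2 * (\<Sum>j\<in>J. (x j)\<^sup>2)) / w\<^sup>2"
    proof (rule divide_right_mono)
      show "(\<Sum>k\<in>K. (\<Sum>j\<in>J. A k j * x j)\<^sup>2) \<le> (q*Mg)\<^sup>2 * (\<Sum>j\<in>J. (x j)\<^sup>2)"
        unfolding A_def by (rule opb[OF Kf Jf inj_on_id g'm]) (rule g'b)
    qed simp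
    also have "\<dots> = (q * Mg / w)\<^sup>2 * (\<Sum>j\<in>J. (x j)\<^sup>2)" by (simp add: power_divide)
    finally show ?thesis .
  qed
  have b2: "(\<Sum>k\<in>K. (\<Sum>j\<in>J. M2 k j * x j)\<^sup>2) \<le> (q * Mf)\<^sup>2 * (\<Sum>j\<in>J. (x j)\<^sup>2)" for x
  proof -
    define J' where "J' = J - {0}"
    have J'f: "finite J'" using Jf by (simp add: J'_def)
    have injJ': "inj_on sw J'" using inj_sw by (rule inj_on_subset) (auto simp: J'_def)
    have "(\<Sum>j\<in>J. M2 k j * x j)\<^sup>2 = (\<Sum>j\<in>J'. B k j * (sg j * x j))\<^sup>2" for k
    proof -
      have "(\<Sum>j\<in>J. M2 k j * x j) = (\<Sum>j\<in>J'. M2 k j * x j)"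
        unfolding J'_def by (rule sum.mono_neutral_right[OF Jf]) (auto simp: M2_def)
      also have "\<dots> = - sg (sw k) * (\<Sum>j\<in>J'. B k j * (sg j * x j))"
        by (simp add: sum_distrib_left M2_def J'_def ac_simps)
      finally show ?thesis by (simp add: power_mult_distrib power2_eq_square[of "sg _"] sg_sq)
    qed
    then have "(\<Sum>k\<in>K. (\<Sum>j\<in>J. M2 k j * x j)\<^sup>2) = (\<Sum>k\<in>K. (\<Sum>j\<in>J'. B k j * (sg j * x j))\<^sup>2)" by simp
    also have "\<dots> \<le> (q * Mf)\<^sup>2 * (\<Sum>j\<in>J'. (sg j * x j)\<^sup>2)"
      unfolding B_def by (rule opb[OF Kf J'f injJ' fm]) (use fb in auto)
    also have "\<dots> = (q * Mf)\<^sup>2 * (\<Sum>j\<in>J'. (x j)\<^sup>2)"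
      by (simp add: power_mult_distrib power2_eq_square[of "sg _"] sg_sq)
    also have "\<dots> \<le> (q * Mf)\<^sup>2 * (\<Sum>j\<in>J. (x j)\<^sup>2)"
      by (intro mult_left_mono sum_mono2 Jf) (auto simp: J'_def)
    finally show ?thesis .
  qed
  obtain E1 where E1: "opnorm_le1 K J E1" "\<forall>k\<in>K. \<forall>j\<in>J. M1 k j = (q * Mg / w) * E1 k j"
    using factor[OF Kf(1) Jf _ b1] q_pos w_pos Mg0 by auto
  obtain E2 where E2: "opnorm_le1 K J E2" "\<forall>k\<in>K. \<forall>j\<in>J. M2 k j = (q * Mf) * E2 k j"
    using factor[OF Kf(1) Jf _ b2] q_pos Mf0 by auto
  show ?thesis
  proof -
    have "opnorm_le1 {3..N1-1} {0..N1-1} E1" "opnorm_le1 {3..N1-1} {0..N1-1} E2"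
      using E1 E2 by (simp_all add: K_def J_def)
    moreover have "\<bar>q * Mg / w\<bar> \<le> (q / w + q) * Mg"
      using q_pos w_pos Mg0 by (simp add: abs_of_nonneg field_simps)
    moreover have "\<bar>q * Mf\<bar> \<le> (q / w + q) * Mf"
      using q_pos w_pos Mf0 by (simp add: abs_of_nonneg field_simps)
    moreover have "\<forall>k\<in>{3..N1-1}. \<forall>j\<in>{0..N1-1}.
                  integral {0..Lp R0 p0} (\<lambda>s. f s * Theta_t R0 p0 j s * (beta k * Theta_t R0 p0 k s))
                  = (q * Mg / w) * E1 k j + (q * Mf) * beta j * E2 k j"
      using ident E1(2) E2(2) unfolding K_def J_def L_def by (simp add: ac_simps)
    ultimately show ?thesis by blast
  qed
qed

lemma part2: "\<exists>C. \<forall>N1::nat. \<forall>f g Mf Mg. N1 \<ge> 4 \<longrightarrow> periodic_with_deriv (Lp R0 p0) f g \<longrightarrow>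
            (\<forall>x. \<bar>f x\<bar> \<le> Mf) \<longrightarrow> (AE x in lborel. \<bar>g x\<bar> \<le> Mg) \<longrightarrow>
            (\<exists>a1 a2 E1 E2.
               opnorm_le1 {3..N1-1} {0..N1-1} E1 \<and> opnorm_le1 {3..N1-1} {0..N1-1} E2 \<and>
               \<bar>a1\<bar> \<le> C * Mg \<and> \<bar>a2\<bar> \<le> C * Mf \<and>
               (\<forall>k\<in>{3..N1-1}. \<forall>j\<in>{0..N1-1}.
                  integral {0..Lp R0 p0} (\<lambda>s. f s * Theta_t R0 p0 j s * (beta k * Theta_t R0 p0 k s))
                  = a1 * E1 k j + a2 * beta j * E2 k j))"
  using part2_aux by blast

end

theorem lemma6p6:
  fixes R0 p0 :: real
  assumes "R0 > 0" and "p0 > - 1 / 2"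
  shows "(\<exists>C. \<forall>N1::nat. \<forall>f g. N1 \<ge> 4 \<longrightarrow> H1_circle (Lp R0 p0) f g \<longrightarrow>
            sqrt (\<Sum>k\<in>{3..N1-1}.
                    (integral {0..Lp R0 p0} (\<lambda>s. f s * (beta k * Theta_t R0 p0 k s)))\<^sup>2)
            \<le> C * L2norm_circle (Lp R0 p0) g)
       \<and> (\<exists>C. \<forall>N1::nat. \<forall>f g Mf Mg. N1 \<ge> 4 \<longrightarrow> periodic_with_deriv (Lp R0 p0) f g \<longrightarrow>
            (\<forall>x. \<bar>f x\<bar> \<le> Mf) \<longrightarrow> (AE x in lborel. \<bar>g x\<bar> \<le> Mg) \<longrightarrow>
            (\<exists>a1 a2 E1 E2.
               opnorm_le1 {3..N1-1} {0..N1-1} E1 \<and> opnorm_le1 {3..N1-1} {0..N1-1} E2 \<and>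
               \<bar>a1\<bar> \<le> C * Mg \<and> \<bar>a2\<bar> \<le> C * Mf \<and>
               (\<forall>k\<in>{3..N1-1}. \<forall>j\<in>{0..N1-1}.
                  integral {0..Lp R0 p0} (\<lambda>s. f s * Theta_t R0 p0 j s * (beta k * Theta_t R0 p0 k s))
                  = a1 * E1 k j + a2 * beta j * E2 k j)))"
proof -
  interpret bas R0 p0 using assms by unfold_locales
  show ?thesis using part1 part2 by blast
qed

end
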